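(* In the setting of the context, assume (G1) and (G2). 1. If (G3) holds, then ($\overline{G}_3$) holds. 2. If $X_0\neq X$ and ($\overline{G}_3$) holds, then (G3) holds. Here (G3): there exists $c_2\ge1$ such that $\operatorname{cap}U(x,r)\ge c_2^{-1}g(r)^{-1}$ for all $x\in X_0$ and $0<r<R_0(x)$; and ($\overline G_3$): there exists $c_2\ge1$ such that for all $x\in X_0$, $0<r<R_0(x)$ and $y\in X\setminus U(x,r)$, $\|\varepsilon_y^{\overline{U(x,r)}}\|\ge c_2^{-1}g(r)^{-1}G(y,x)$.
   Context: $(X,\rho)$ is a separable metric space, $X_0\subseteq X$ open; $\mathcal M(X)$ is the set of finite Borel measures (extended to universally measurable sets), $\|\mu\|:=\mu(X)$, $\varepsilon_x$ the Dirac measure. For every open $U\subseteq X$ and $x\in X$ a measure $\mu_x^U\in\mathcal M(X)$ is given such that for all open $U,V$ and all $x$: $\mu_x^U(U)=0$, $\|\mu_x^U\|\le1$, $\mu_x^U=\varepsilon_x$ if $x\notin U$; $y\mapsto\mu_y^U(E)$ is universally measurable for Borel $E$; and $\mu_x^U=\int\mu_y^U\,d\mu_x^V(y)$ if $V\subseteq U$. For closed $A$, $\varepsilon_x^A:=\mu_x^{X\setminus A}$. $\mathcal U(X_0)$ is the set of open $U$ with $\overline U\subseteq X_0$; $U(x,r)$ the open ball; $R_0(x):=\sup\{r>0:\overline{U(x,r)}\subseteq X_0\}$ for $x\in X_0$. $G\colon X\times X\to(0,\infty]$ is Borel, $G\mu(x):=\int G(x,y)\,d\mu(y)$, and $\operatorname{cap}A:=\sup\{\|\mu\|:\mu\in\mathcal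 M(X),\ \mu(X\setminus A)=0,\ G\mu\le1\}$. (G1): there exists $c_1\ge1$ such that for all $U\in\mathcal U(X_0)$, $x\in U$, $\delta>0$ and every closed $A\subseteq U$ there are a closed neighborhood $B\subseteq U$ of $A$ and a measure $\nu$ carried by $B$ with $\|\varepsilon_x^B\|-\delta<c_1\|\varepsilon_x^A\|$ and $\|\varepsilon_y^A\|\le G\nu(y)\le c_1\|\varepsilon_y^B\|$ for all $y\in X$. (G2): there are a strictly decreasing continuous $g\colon[0,\infty)\to(0,\infty]$ and constants $c,c_D,M_0\in[1,\infty)$, $\alpha_0\in(0,1)$ such that for all $r>0$, $g(r/2)\le c_Dg(r)$, $M_0g(r)\le g(\alpha_0r)$, and $c^{-1}g\circ\rho\le G\le c\,g\circ\rho$ on $X\times X$. *)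

theory Defs
  imports "HOL-Analysis.Analysis" "HOL-Probability.Probability"
begin

text \<open>The space X is the whole type 'a (a separable = second countable metric space).
  Measures in M(X) are finite measures on the Borel sets of X; they are extended to
  universally measurable sets via their completion.\<close>

definition fin_borel :: "'a::topological_space measure \<Rightarrow> bool" where
  "fin_borel \<mu> \<longleftrightarrow> sets \<mu> = sets borel \<and> finite_measure \<mu>"

definition univ_meas_fun :: "('a::topological_space \<Rightarrow> ennreal) \<Rightarrow> bool" where
  "univ_meas_fun f \<longleftrightarrow> (\<forall>\<mu>. fin_borel \<mu> \<longrightarrow> f \<in> borel_measurable (completion \<mu>))"

definition mnorm :: "'a measure \<Rightarrow> real" where
  "mnorm \<mu> = measure \<mu> (space \<mu>)"

text \<open>Standing assumptions on the family \<mu>_x^U, written here as  mu U x.\<close>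
definition harmonic_kernel :: "('a::topological_space set \<Rightarrow> 'a \<Rightarrow> 'a measure) \<Rightarrow> bool" where
  "harmonic_kernel mu \<longleftrightarrow>
     (\<forall>U x. open U \<longrightarrow> fin_borel (mu U x)) \<and>
     (\<forall>U x. open U \<longrightarrow> emeasure (mu U x) U = 0) \<and>
     (\<forall>U x. open U \<longrightarrow> mnorm (mu U x) \<le> 1) \<and>
     (\<forall>U x. open U \<longrightarrow> x \<notin> U \<longrightarrow> mu U x = return borel x) \<and>
     (\<forall>U E. open U \<longrightarrow> E \<in> sets borel \<longrightarrow> univ_meas_fun (\<lambda>y. emeasure (mu U y) E)) \<and>
     (\<forall>U V x. open U \<longrightarrow> open V \<longrightarrow> V \<subseteq> U \<longrightarrow>
        (\<forall>E\<in>sets borel. emeasure (mu U x) E =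
            (\<integral>\<^sup>+ y. emeasure (mu U y) E \<partial>(completion (mu V x)))))"

definition swept :: "('a set \<Rightarrow> 'a \<Rightarrow> 'a measure) \<Rightarrow> 'a set \<Rightarrow> 'a \<Rightarrow> 'a measure" where
  "swept mu A x = mu (UNIV - A) x"

definition rel_compact_opens :: "'a::topological_space set \<Rightarrow> 'a set set" where
  "rel_compact_opens X0 = {U. open U \<and> closure U \<subseteq> X0}"

definition R0 :: "'a::metric_space set \<Rightarrow> 'a \<Rightarrow> ereal" where
  "R0 X0 x = Sup {ereal r | r. r > 0 \<and> closure (ball x r) \<subseteq> X0}"

definition Gpot :: "('a \<Rightarrow> 'a \<Rightarrow> ennreal) \<Rightarrow> 'a measure \<Rightarrow> 'a \<Rightarrow> ennreal" where
  "Gpot G \<mu> x = (\<integral>\<^sup>+ y. G x y \<partial>\<mu>)"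

text \<open>cap A = sup{\<parallel>\<mu>\<parallel> : \<mu> in M(X), \<mu>(X \ A) = 0, G\<mu> \<le> 1}; \<mu>(X \ A) = 0 is read
  for the extension of \<mu> (X \ A is contained in a Borel \<mu>-null set).\<close>
definition cap :: "('a::topological_space \<Rightarrow> 'a \<Rightarrow> ennreal) \<Rightarrow> 'a set \<Rightarrow> ennreal" where
  "cap G A = Sup {emeasure \<mu> (space \<mu>) | \<mu>. fin_borel \<mu> \<and>
       (\<exists>N\<in>sets borel. UNIV - A \<subseteq> N \<and> emeasure \<mu> N = 0) \<and> (\<forall>x. Gpot G \<mu> x \<le> 1)}"

definition G1 :: "('a::metric_space set \<Rightarrow> 'a \<Rightarrow> 'a measure) \<Rightarrow> ('a \<Rightarrow> 'a \<Rightarrow> ennreal) \<Rightarrow> 'a set \<Rightarrow> bool" where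
  "G1 mu G X0 \<longleftrightarrow> (\<exists>c1::real. c1 \<ge> 1 \<and>
     (\<forall>U\<in>rel_compact_opens X0. \<forall>x\<in>U. \<forall>\<delta>::real. \<delta> > 0 \<longrightarrow>
       (\<forall>A. closed A \<and> A \<subseteq> U \<longrightarrow>
         (\<exists>B \<nu>. closed B \<and> B \<subseteq> U \<and> A \<subseteq> interior B \<and>
            fin_borel \<nu> \<and> emeasure \<nu> (UNIV - B) = 0 \<and>
            mnorm (swept mu B x) - \<delta> < c1 * mnorm (swept mu A x) \<and>
            (\<forall>y. ennreal (mnorm (swept mu A y)) \<le> Gpot G \<nu> y \<and>
                 Gpot G \<nu> y \<le> ennreal (c1 * mnorm (swept mu B y)))))))"

definition G2 :: "('a::metric_space \<Rightarrow> 'a \<Rightarrow> ennreal) \<Rightarrow> (real \<Rightarrow> ennreal) \<Rightarrow> bool" where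
  "G2 G g \<longleftrightarrow>
     (\<forall>s t. 0 \<le> s \<and> s < t \<longrightarrow> g t < g s) \<and> continuous_on {0..} g \<and>
     (\<forall>t\<ge>0. g t > 0) \<and>
     (\<exists>c cD M0 \<alpha>0::real. c \<ge> 1 \<and> cD \<ge> 1 \<and> M0 \<ge> 1 \<and> 0 < \<alpha>0 \<and> \<alpha>0 < 1 \<and>
        (\<forall>r>0. g (r/2) \<le> ennreal cD * g r) \<and>
        (\<forall>r>0. ennreal M0 * g r \<le> g (\<alpha>0 * r)) \<and>
        (\<forall>x y. ennreal (1/c) * g (dist x y) \<le> G x y \<and> G x y \<le> ennreal c * g (dist x y)))"

definition G3 :: "('a::metric_space \<Rightarrow> 'a \<Rightarrow> ennreal) \<Rightarrow> (real \<Rightarrow> ennreal) \<Rightarrow> 'a set \<Rightarrow> bool" where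
  "G3 G g X0 \<longleftrightarrow> (\<exists>c2::real. c2 \<ge> 1 \<and>
     (\<forall>x\<in>X0. \<forall>r::real. 0 < r \<and> ereal r < R0 X0 x \<longrightarrow>
        cap G (ball x r) \<ge> ennreal (1/c2) * inverse (g r)))"

definition G3bar :: "('a::metric_space set \<Rightarrow> 'a \<Rightarrow> 'a measure) \<Rightarrow> ('a \<Rightarrow> 'a \<Rightarrow> ennreal) \<Rightarrow> (real \<Rightarrow> ennreal) \<Rightarrow> 'a set \<Rightarrow> bool" where
  "G3bar mu G g X0 \<longleftrightarrow> (\<exists>c2::real. c2 \<ge> 1 \<and>
     (\<forall>x\<in>X0. \<forall>r::real. 0 < r \<and> ereal r < R0 X0 x \<longrightarrow>
       (\<forall>y. y \<notin> ball x r \<longrightarrow>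
          ennreal (mnorm (swept mu (closure (ball x r)) y)) \<ge>
            ennreal (1/c2) * inverse (g r) * G y x)))"

end

theory Submission
  imports Defs
begin


lemma fb_space: "fin_borel \<mu> \<Longrightarrow> space \<mu> = UNIV"
  unfolding fin_borel_def by (metis sets_eq_imp_space_eq space_borel)

lemma fb_sets: "fin_borel \<mu> \<Longrightarrow> sets \<mu> = sets borel"
  unfolding fin_borel_def by simp

lemma fb_finite: "fin_borel \<mu> \<Longrightarrow> finite_measure \<mu>"
  unfolding fin_borel_def by simp

lemma mnorm_emeasure: "fin_borel \<mu> \<Longrightarrow> emeasure \<mu> UNIV = ennreal (mnorm \<mu>)"
  unfolding mnorm_def using fb_space[of \<mu>] fb_finite[of \<mu>]
  by (metis finite_measure.emeasure_eq_measure)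

lemma mnorm_nonneg: "0 \<le> mnorm \<mu>" unfolding mnorm_def by simp



lemma R0_less: "ereal r < R0 X0 x \<Longrightarrow> \<exists>r'>r. closure (ball x r') \<subseteq> X0"
  unfolding R0_def by (auto simp: less_Sup_iff)

lemma ge1_mult: "1 \<le> (a::real) \<Longrightarrow> 1 \<le> b \<Longrightarrow> 1 \<le> a*b"
  using mult_mono[of 1 a 1 b] by simp

lemma g_fin: "\<forall>s t::real. 0 \<le> s \<and> s < t \<longrightarrow> g t < g s \<Longrightarrow> 0 < t \<Longrightarrow> g t < (top::ennreal)"
proof -
  assume a: "\<forall>s t::real. 0 \<le> s \<and> s < t \<longrightarrow> g t < g s" and b: "0 < t"
  have "g t < g 0" using a b by auto
  then show ?thesis using top_greatest[of "g 0"] by (rule less_le_trans)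
qed

lemma g_anti: "\<forall>s t::real. 0 \<le> s \<and> s < t \<longrightarrow> g t < (g s::ennreal) \<Longrightarrow> 0 \<le> s \<Longrightarrow> s \<le> t \<Longrightarrow> g t \<le> g s"
proof (cases "s = t")
  case False
  assume a: "\<forall>s t::real. 0 \<le> s \<and> s < t \<longrightarrow> g t < (g s::ennreal)" "0 \<le> s" "s \<le> t"
  then have "g t < g s" using False by auto
  then show ?thesis by (rule less_imp_le)
qed simp
lemma c3: "(c::real) \<ge> 1 \<Longrightarrow> cD \<ge> 1 \<Longrightarrow> ennreal c * (ennreal cD * (ennreal c * X)) = ennreal (c*c*cD) * X"
proof -
  assume "c \<ge> 1" "cD \<ge> 1"
  then have "ennreal (c*c*cD) = ennreal c * ennreal c * ennreal cD"
    by (simp add: ennreal_mult)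
  then show ?thesis by (simp add: ac_simps)
qed
lemma c3inv: "(k::real) \<ge> 1 \<Longrightarrow> ennreal (1/k) * (ennreal k * X) = X"
proof -
  assume "k \<ge> 1"
  then have "ennreal (1/k) * ennreal k = 1" by (simp flip: ennreal_mult)
  then show ?thesis by (simp add: mult.assoc[symmetric])
qed
lemma le_cG: "ennreal (1/c) * a \<le> b \<Longrightarrow> (c::real) \<ge> 1 \<Longrightarrow> a \<le> ennreal c * b"
proof -
  assume h: "ennreal (1/c) * a \<le> b" "c \<ge> 1"
  have "a = ennreal c * (ennreal (1/c) * a)"
    using h(2) by (simp add: mult.assoc[symmetric] ennreal_mult[symmetric])
  also have "\<dots> \<le> ennreal c * b" using h(1) by (simp add: mult_left_mono)
  finally show ?thesis .
qed

lemma enn_real: "0 < a \<Longrightarrow> a < top \<Longrightarrow> \<exists>t>0. a = ennreal t"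
  by (metis enn2real_positive_iff ennreal_enn2real)

lemma geo2:
  fixes G :: "'a::metric_space \<Rightarrow> 'a \<Rightarrow> ennreal" and g :: "real \<Rightarrow> ennreal"
  assumes dec: "\<forall>s t. 0 \<le> s \<and> s < t \<longrightarrow> g t < g s"
    and c: "c \<ge> 1" and cD: "cD \<ge> 1" and dbl: "\<forall>r>0. g (r/2) \<le> ennreal cD * g r"
    and cmp: "\<forall>x y. ennreal (1/c) * g (dist x y) \<le> G x y \<and> G x y \<le> ennreal c * g (dist x y)"
    and d: "dist x y \<ge> r" "dist x w < r/2" "0 < r"
  shows "G y w \<le> ennreal (c*c*cD) * G y x"
proof -
  define d where "d = dist y x"
  have dd: "d = dist x y" unfolding d_def by (rule dist_commute)
  have d0: "d > 0" "d \<ge> r" using d dd by auto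
  have t: "dist y x \<le> dist y w + dist x w" using dist_triangle[of y x w] by (metis dist_commute)
  have "dist y w \<ge> d/2" using t d d0 unfolding d_def by linarith
  then have "g (dist y w) \<le> g (d/2)" by (intro g_anti[OF dec]) (use d0 in auto)
  also have "\<dots> \<le> ennreal cD * g d" using dbl d0 by blast
  also have "\<dots> \<le> ennreal cD * (ennreal c * G y x)"
  proof (rule mult_left_mono)
    show "g d \<le> ennreal c * G y x" unfolding d_def by (rule le_cG) (use cmp c in auto)
  qed simp
  finally have 1: "g (dist y w) \<le> ennreal cD * (ennreal c * G y x)" .
  have "G y w \<le> ennreal c * g (dist y w)" using cmp by blast
  also have "\<dots> \<le> ennreal c * (ennreal cD * (ennreal c * G y x))" by (rule mult_left_mono[OF 1]) simp
  also have "\<dots> = ennreal (c*c*cD) * G y x" using c cD by (rule c3)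
  finally show ?thesis .
qed

lemma geo1:
  fixes G :: "'a::metric_space \<Rightarrow> 'a \<Rightarrow> ennreal" and g :: "real \<Rightarrow> ennreal"
  assumes dec: "\<forall>s t. 0 \<le> s \<and> s < t \<longrightarrow> g t < g s"
    and c: "c \<ge> 1" and cD: "cD \<ge> 1" and dbl: "\<forall>r>0. g (r/2) \<le> ennreal cD * g r"
    and cmp: "\<forall>x y. ennreal (1/c) * g (dist x y) \<le> G x y \<and> G x y \<le> ennreal c * g (dist x y)"
    and d: "dist x y \<ge> r" "dist x w < r" "0 < r"
  shows "ennreal (1/(c*c*cD)) * G y x \<le> G y w"
proof -
  define d where "d = dist y x"
  have dd: "d = dist x y" unfolding d_def by (rule dist_commute)
  have d0: "d > 0" "d \<ge> r" using d dd by auto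
  have t: "dist y w \<le> dist y x + dist x w" by (rule dist_triangle)
  have "dist y w \<le> 2*d" using t d d0 unfolding d_def by linarith
  then have 1: "g (2*d) \<le> g (dist y w)" by (intro g_anti[OF dec]) (use d0 in auto)
  have "G y x \<le> ennreal c * g d" using cmp unfolding d_def by blast
  also have "\<dots> \<le> ennreal c * (ennreal cD * g (2*d))"
  proof (rule mult_left_mono)
    have "g ((2*d)/2) \<le> ennreal cD * g (2*d)" using dbl[rule_format, of "2*d"] d0 by simp
    then show "g d \<le> ennreal cD * g (2*d)" by simp
  qed simp
  also have "\<dots> \<le> ennreal c * (ennreal cD * g (dist y w))"
    by (intro mult_left_mono 1) simp_all
  also have "\<dots> \<le> ennreal c * (ennreal cD * (ennreal c * G y w))"
  proof (intro mult_left_mono)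
    show "g (dist y w) \<le> ennreal c * G y w" by (rule le_cG) (use cmp c in auto)
  qed simp_all
  also have "\<dots> = ennreal (c*c*cD) * G y w" using c cD by (rule c3)
  finally have 2: "G y x \<le> ennreal (c*c*cD) * G y w" .
  have "ennreal (1/(c*c*cD)) * G y x \<le> ennreal (1/(c*c*cD)) * (ennreal (c*c*cD) * G y w)"
    by (rule mult_left_mono[OF 2]) simp
  also have "\<dots> = G y w" using c cD by (intro c3inv ge1_mult) auto
  finally show ?thesis .
qed


lemma hk_fb: "harmonic_kernel mu \<Longrightarrow> \<forall>U x. open U \<longrightarrow> fin_borel (mu U x)"
  unfolding harmonic_kernel_def by (elim conjE) assumption

lemma hk_zero: "harmonic_kernel mu \<Longrightarrow> \<forall>U x. open U \<longrightarrow> emeasure (mu U x) U = 0"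
  unfolding harmonic_kernel_def by (elim conjE) assumption

lemma hk_le1: "harmonic_kernel mu \<Longrightarrow> \<forall>U x. open U \<longrightarrow> mnorm (mu U x) \<le> 1"
  unfolding harmonic_kernel_def by (elim conjE) assumption

lemma hk_ret: "harmonic_kernel mu \<Longrightarrow> \<forall>U x. open U \<longrightarrow> x \<notin> U \<longrightarrow> mu U x = return borel x"
  unfolding harmonic_kernel_def by (elim conjE) assumption

lemma hk_comp: "harmonic_kernel mu \<Longrightarrow> \<forall>U V x. open U \<longrightarrow> open V \<longrightarrow> V \<subseteq> U \<longrightarrow>
        (\<forall>E\<in>sets borel. emeasure (mu U x) E =
            (\<integral>\<^sup>+ y. emeasure (mu U y) E \<partial>(completion (mu V x))))"
  unfolding harmonic_kernel_def by (elim conjE) assumption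

lemma swept_le1: "harmonic_kernel mu \<Longrightarrow> closed A \<Longrightarrow> mnorm (swept mu A y) \<le> 1"
proof -
  assume h: "harmonic_kernel mu" "closed A"
  have "open (UNIV - A)" using h(2) by (simp add: open_Diff)
  then show ?thesis unfolding swept_def using hk_le1[OF h(1)] by blast
qed

lemma swept_in: "harmonic_kernel mu \<Longrightarrow> closed A \<Longrightarrow> z \<in> A \<Longrightarrow> mnorm (swept mu A z) = 1"
proof -
  assume h: "harmonic_kernel mu" "closed A" "z \<in> A"
  have "open (UNIV - A)" using h(2) by (simp add: open_Diff)
  then have "swept mu A z = return borel z" unfolding swept_def
    using hk_ret[OF h(1)] h(3) by blast
  then show ?thesis unfolding mnorm_def by (simp add: measure_return)
qed

lemma swept_mono:
  assumes h: "harmonic_kernel mu" and cB: "closed B" and cC: "closed C" and BC: "B \<subseteq> C"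
  shows "mnorm (swept mu B y) \<le> mnorm (swept mu C y)"
proof -
  let ?U = "UNIV - B" and ?V = "UNIV - C"
  have oU: "open ?U" and oV: "open ?V" using cB cC by (auto simp: open_Diff)
  have VU: "?V \<subseteq> ?U" using BC by auto
  have fU: "\<And>z. fin_borel (mu ?U z)" using hk_fb[OF h] oU by blast
  have fV: "fin_borel (mu ?V y)" using hk_fb[OF h] oV by blast
  have "emeasure (mu ?U y) UNIV = (\<integral>\<^sup>+ z. emeasure (mu ?U z) UNIV \<partial>(completion (mu ?V y)))"
    using hk_comp[OF h, rule_format, OF oU oV VU, of UNIV y] by simp
  also have "\<dots> \<le> (\<integral>\<^sup>+ z. 1 \<partial>(completion (mu ?V y)))"
  proof (rule nn_integral_mono)
    fix z
    have "emeasure (mu ?U z) UNIV = ennreal (mnorm (mu ?U z))" using mnorm_emeasure[OF fU] .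
    also have "\<dots> \<le> 1" using hk_le1[OF h] oU by simp
    finally show "emeasure (mu ?U z) UNIV \<le> 1" .
  qed
  also have "\<dots> = emeasure (mu ?V y) UNIV"
    using fb_space[OF fV] emeasure_completion[of UNIV "mu ?V y"] sets.top[of "mu ?V y"]
    by (simp add: nn_integral_const)
  finally have "ennreal (mnorm (mu ?U y)) \<le> ennreal (mnorm (mu ?V y))"
    using mnorm_emeasure[OF fU] mnorm_emeasure[OF fV] by simp
  then show ?thesis unfolding swept_def
    using ennreal_le_iff[OF mnorm_nonneg[of "mu ?V y"], of "mnorm (mu ?U y)"] by simp
qed

lemma G_meas:
  fixes G :: "'a::second_countable_topology \<Rightarrow> 'a \<Rightarrow> ennreal"
  assumes "case_prod G \<in> borel_measurable borel" "fin_borel \<mu>"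
  shows "(\<lambda>z. G w z) \<in> borel_measurable \<mu>"
proof -
  have "case_prod G \<in> borel_measurable (borel \<Otimes>\<^sub>M borel)" using assms(1) by (simp add: borel_prod)
  then have "(\<lambda>z. case_prod G (w, z)) \<in> borel_measurable borel" by (rule measurable_Pair2) simp
  moreover have "(borel_measurable \<mu> :: ('a \<Rightarrow> ennreal) set) = borel_measurable borel"
    by (rule measurable_cong_sets[OF fb_sets[OF assms(2)] refl])
  ultimately show ?thesis by simp
qed

lemma real2:
  fixes c1 c2 c cD a b e t n :: real
  assumes p: "c1 \<ge> 1" "c2 \<ge> 1" "c \<ge> 1" "cD \<ge> 1" "a > 0" "b > 0" "e > 0" "t > 0" "n \<ge> 0"
    and h1: "1/c2*(1/e)*t \<le> c*c*cD*t*n" and h2: "b \<le> cD*a" and h3: "e \<le> cD*b"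
  shows "1/(c1*c2*c*c*cD*cD*cD)*(1/a) \<le> 1/c1*n"
proof -
  have "(1/c2*(1/e))*t \<le> (c*c*cD*n)*t" using h1 by (simp add: ac_simps)
  then have s1: "1/c2*(1/e) \<le> c*c*cD*n" using mult_le_cancel_right_pos[OF p(8)] by blast
  have ce: "c2*e > 0" using p by simp
  have "1/(c2*e) \<le> c*c*cD*n" using s1 by simp
  then have k: "1 \<le> (c2*e)*(c*c*cD*n)" using ce by (simp add: divide_le_eq mult.commute)
  have "cD*b \<le> cD*(cD*a)" using h2 p by simp
  then have "e \<le> cD*cD*a" using h3 by (simp add: mult.assoc)
  then have "(c2*e)*(c*c*cD*n) \<le> (c2*(cD*cD*a))*(c*c*cD*n)" using p
    by (intro mult_right_mono mult_left_mono) auto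
  with k have k1: "1 \<le> (c2*(cD*cD*a))*(c*c*cD*n)" by (rule order_trans)
  have "(c1*c2*c*c*cD*cD*cD*a) * (n/c1) = (c2*(cD*cD*a))*(c*c*cD*n)" using p by (simp add: field_simps)
  with k1 have k2: "1 \<le> (c1*c2*c*c*cD*cD*cD*a) * (n/c1)" by simp
  have pos: "c1*c2*c*c*cD*cD*cD*a > 0" using p by simp
  have "1/(c1*c2*c*c*cD*cD*cD)*(1/a) = 1/(c1*c2*c*c*cD*cD*cD*a)" by simp
  also have "\<dots> \<le> n/c1" using k2 pos by (simp add: divide_le_eq mult.commute)
  finally show ?thesis by simp
qed




lemma em3: "0 \<le> a \<Longrightarrow> 0 \<le> b \<Longrightarrow> 0 \<le> d \<Longrightarrow> ennreal (a*b*d) = ennreal a * ennreal b * ennreal d"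
  by (simp add: ennreal_mult)
lemma em2: "0 \<le> a \<Longrightarrow> 0 \<le> b \<Longrightarrow> ennreal (a*b) = ennreal a * ennreal b"
  by (rule ennreal_mult)
lemma einv: "0 < e \<Longrightarrow> inverse (ennreal e) = ennreal (1/e)"
  by (simp add: inverse_ennreal inverse_eq_divide)

lemma cl_sub: "closure (ball (x::'a::metric_space) e) \<subseteq> cball x e"
  by (rule closure_minimal) auto

lemma part2:
  fixes mu :: "'a::{metric_space, second_countable_topology} set \<Rightarrow> 'a \<Rightarrow> 'a measure"
    and G :: "'a \<Rightarrow> 'a \<Rightarrow> ennreal" and g :: "real \<Rightarrow> ennreal" and X0 :: "'a set"
  assumes h: "harmonic_kernel mu" and Gm: "case_prod G \<in> borel_measurable borel"
    and Gpos: "\<forall>x y. G x y > 0" and g1: "G1 mu G X0"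
    and dec: "\<forall>s t. 0 \<le> s \<and> s < t \<longrightarrow> g t < g s" and gpos: "\<forall>t\<ge>0. g t > 0"
    and c: "c \<ge> 1" and cD: "cD \<ge> 1" and dbl: "\<forall>r>0. g (r/2) \<le> ennreal cD * g r"
    and cmp: "\<forall>x y. ennreal (1/c) * g (dist x y) \<le> G x y \<and> G x y \<le> ennreal c * g (dist x y)"
    and X0ne: "X0 \<noteq> UNIV" and g3b: "G3bar mu G g X0"
  shows "G3 G g X0"
proof -
  obtain c1 where c1: "c1 \<ge> 1" and G1c: "\<forall>U\<in>rel_compact_opens X0. \<forall>x\<in>U. \<forall>\<delta>::real. \<delta> > 0 \<longrightarrow>
       (\<forall>A. closed A \<and> A \<subseteq> U \<longrightarrow>
         (\<exists>B \<nu>. closed B \<and> B \<subseteq> U \<and> A \<subseteq> interior B \<and>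
            fin_borel \<nu> \<and> emeasure \<nu> (UNIV - B) = 0 \<and>
            mnorm (swept mu B x) - \<delta> < c1 * mnorm (swept mu A x) \<and>
            (\<forall>y. ennreal (mnorm (swept mu A y)) \<le> Gpot G \<nu> y \<and>
                 Gpot G \<nu> y \<le> ennreal (c1 * mnorm (swept mu B y)))))"
    using g1 unfolding G1_def by (elim exE conjE) (rule that; assumption)
  obtain c2 where c2: "c2 \<ge> 1" and g3: "\<forall>x\<in>X0. \<forall>r::real. 0 < r \<and> ereal r < R0 X0 x \<longrightarrow>
       (\<forall>y. y \<notin> ball x r \<longrightarrow>
          ennreal (mnorm (swept mu (closure (ball x r)) y)) \<ge>
            ennreal (1/c2) * inverse (g r) * G y x)"
    using g3b unfolding G3bar_def by (elim exE conjE) (rule that; assumption)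
  obtain y0 where y0: "y0 \<notin> X0" using X0ne by auto
  define C where "C = c1*c2*c*c*cD*cD*cD"
  have C1: "C \<ge> 1" unfolding C_def using c1 c2 c cD by (intro ge1_mult) auto
  show ?thesis unfolding G3_def
  proof (intro exI[of _ C] conjI ballI allI impI C1)
    fix x r assume x: "x \<in> X0" and rr: "0 < r \<and> ereal r < R0 X0 x"
    have r0: "r > 0" using rr by simp
    obtain r' where r': "r' > r" "closure (ball x r') \<subseteq> X0" using R0_less rr by blast
    have dy: "dist x y0 \<ge> r"
    proof (rule ccontr)
      assume "\<not> r \<le> dist x y0"
      then have "y0 \<in> ball x r'" using r' by simp
      then show False using y0 r' closure_subset by blast
    qed
    define U where "U = ball x (r/2)"
    define A where "A = closure (ball x (r/4))"
    have U: "U \<in> rel_compact_opens X0"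
    proof -
      have "closure U \<subseteq> cball x (r/2)" unfolding U_def by (rule cl_sub)
      also have "\<dots> \<subseteq> ball x r'" using r' r0 by auto
      also have "\<dots> \<subseteq> X0" using r' closure_subset by blast
      finally show ?thesis unfolding rel_compact_opens_def U_def by auto
    qed
    have xU: "x \<in> U" unfolding U_def using r0 by simp
    have A: "closed A" "A \<subseteq> U" unfolding A_def U_def using r0 cl_sub[of x "r/4"] by auto
    have "\<exists>B \<nu>. closed B \<and> B \<subseteq> U \<and> A \<subseteq> interior B \<and>
            fin_borel \<nu> \<and> emeasure \<nu> (UNIV - B) = 0 \<and>
            mnorm (swept mu B x) - 1 < c1 * mnorm (swept mu A x) \<and>
            (\<forall>y. ennreal (mnorm (swept mu A y)) \<le> Gpot G \<nu> y \<and>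
                 Gpot G \<nu> y \<le> ennreal (c1 * mnorm (swept mu B y)))"
      using G1c[rule_format, OF U xU zero_less_one conjI[OF A(1) A(2)]] .
    then obtain B \<nu> where B: "closed B" "B \<subseteq> U" and fnu: "fin_borel \<nu>" and nuB: "emeasure \<nu> (UNIV - B) = 0"
      and Gnu: "\<forall>y. ennreal (mnorm (swept mu A y)) \<le> Gpot G \<nu> y \<and> Gpot G \<nu> y \<le> ennreal (c1 * mnorm (swept mu B y))"
      by blast
    have nn: "emeasure \<nu> UNIV = ennreal (mnorm \<nu>)" by (rule mnorm_emeasure[OF fnu])
    have NB: "UNIV - B \<in> sets borel" using B(1) by (simp add: open_Diff)
    have AE_B: "AE w in \<nu>. w \<in> B"
    proof (rule AE_I'[of "UNIV - B"])
      show "UNIV - B \<in> null_sets \<nu>" using NB nuB fb_sets[OF fnu] by (simp add: null_sets_def)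
    qed (use fb_space[OF fnu] in auto)
    have up: "Gpot G \<nu> y0 \<le> ennreal (c*c*cD) * G y0 x * emeasure \<nu> UNIV"
    proof -
      have "Gpot G \<nu> y0 = (\<integral>\<^sup>+w. G y0 w \<partial>\<nu>)" unfolding Gpot_def ..
      also have "\<dots> \<le> (\<integral>\<^sup>+w. ennreal (c*c*cD) * G y0 x \<partial>\<nu>)"
      proof (rule nn_integral_mono_AE)
        show "AE w in \<nu>. G y0 w \<le> ennreal (c*c*cD) * G y0 x"
          using AE_B
        proof (rule AE_mp)
          show "AE w in \<nu>. w \<in> B \<longrightarrow> G y0 w \<le> ennreal (c*c*cD) * G y0 x"
          proof (intro AE_I2 impI)
            fix w assume "w \<in> B"
            then have "dist x w < r/2" using B(2) unfolding U_def by auto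
            then show "G y0 w \<le> ennreal (c*c*cD) * G y0 x"
              by (rule geo2[OF dec c cD dbl cmp dy _ r0])
          qed
        qed
      qed
      also have "\<dots> = ennreal (c*c*cD) * G y0 x * emeasure \<nu> UNIV"
        by (simp add: fb_space[OF fnu])
      finally show ?thesis .
    qed
    have lo: "ennreal (1/c2) * inverse (g (r/4)) * G y0 x \<le> ennreal (mnorm (swept mu A y0))"
    proof -
      have "ereal (r/4) \<le> ereal r" using r0 by simp
      then have R4: "ereal (r/4) < R0 X0 x" using rr order_le_less_trans by blast
      have yb: "y0 \<notin> ball x (r/4)" using dy r0 by simp
      have q4: "0 < r/4" using r0 by simp
      show ?thesis using g3[rule_format, OF x conjI[OF q4 R4] yb] unfolding A_def .
    qed
    define \<nu>' where "\<nu>' = scale_measure (ennreal (1/c1)) \<nu>"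
    have capge: "ennreal (1/c1) * ennreal (mnorm \<nu>) \<le> cap G (ball x r)"
    proof -
      have e': "emeasure \<nu>' (space \<nu>') = ennreal (1/c1) * ennreal (mnorm \<nu>)"
        unfolding \<nu>'_def by (simp add: space_scale_measure fb_space[OF fnu] nn)
      have f': "fin_borel \<nu>'"
        unfolding fin_borel_def
      proof
        show "sets \<nu>' = sets borel" unfolding \<nu>'_def using fb_sets[OF fnu] by simp
        show "finite_measure \<nu>'" by (rule finite_measureI) (simp add: e' ennreal_mult_eq_top_iff)
      qed
      have n': "\<exists>N\<in>sets borel. UNIV - ball x r \<subseteq> N \<and> emeasure \<nu>' N = 0"
      proof (intro bexI conjI)
        show "UNIV - ball x r \<subseteq> UNIV - B" using B(2) r0 unfolding U_def by auto
        show "emeasure \<nu>' (UNIV - B) = 0" unfolding \<nu>'_def using nuB by simp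
      qed (rule NB)
      have g': "\<forall>z. Gpot G \<nu>' z \<le> 1"
      proof
        fix z
        have "Gpot G \<nu>' z = ennreal (1/c1) * Gpot G \<nu> z"
          unfolding Gpot_def \<nu>'_def by (rule nn_integral_scale_measure[OF G_meas[OF Gm fnu]])
        also have "\<dots> \<le> ennreal (1/c1) * ennreal (c1 * 1)"
        proof (rule mult_left_mono)
          have "Gpot G \<nu> z \<le> ennreal (c1 * mnorm (swept mu B z))" using Gnu by blast
          also have "\<dots> \<le> ennreal (c1 * 1)"
            using swept_le1[OF h B(1)] c1 by (intro ennreal_leI mult_left_mono) auto
          finally show "Gpot G \<nu> z \<le> ennreal (c1 * 1)" .
        qed simp
        also have "\<dots> = 1" using c1 by (simp flip: ennreal_mult)
        finally show "Gpot G \<nu>' z \<le> 1" .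
      qed
      have "emeasure \<nu>' (space \<nu>') \<le> cap G (ball x r)"
        unfolding cap_def by (rule Sup_upper) (use f' n' g' in blast)
      then show ?thesis using e' by simp
    qed
    have gfin: "\<And>s. s > 0 \<Longrightarrow> g s < top" using g_fin[OF dec] by blast
    obtain a where a: "a > 0" "g r = ennreal a" using enn_real[of "g r"] gpos gfin r0 by auto
    obtain b where b: "b > 0" "g (r/2) = ennreal b" using enn_real[of "g (r/2)"] gpos gfin r0 by auto
    obtain e where e: "e > 0" "g (r/4) = ennreal e" using enn_real[of "g (r/4)"] gpos gfin r0 by auto
    have y0x: "y0 \<noteq> x" using dy r0 by auto
    have Gfin: "G y0 x < top"
    proof -
      have "G y0 x \<le> ennreal c * g (dist y0 x)" using cmp by blast
      also have "\<dots> < top" using gfin[of "dist y0 x"] y0x by (simp add: ennreal_mult_less_top)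
      finally show ?thesis .
    qed
    obtain t where t: "t > 0" "G y0 x = ennreal t" using enn_real[of "G y0 x"] Gpos Gfin by auto
    define n where "n = mnorm \<nu>"
    have n0: "n \<ge> 0" unfolding n_def by (rule mnorm_nonneg)
    have "ennreal (1/c2 * (1/e) * t) = ennreal (1/c2) * inverse (g (r/4)) * G y0 x"
      unfolding e(2) t(2) einv[OF e(1)] using e t c2 by (intro em3) auto
    also have "\<dots> \<le> ennreal (mnorm (swept mu A y0))" by (rule lo)
    also have "\<dots> \<le> Gpot G \<nu> y0" using Gnu by blast
    also have "\<dots> \<le> ennreal (c*c*cD) * G y0 x * emeasure \<nu> UNIV" by (rule up)
    also have "\<dots> = ennreal (c*c*cD) * ennreal t * ennreal n"
      unfolding nn n_def t(2) ..
    also have "\<dots> = ennreal (c*c*cD*t*n)"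
      using t c cD n0 by (intro em3[symmetric]) auto
    finally have h1: "1/c2*(1/e)*t \<le> c*c*cD*t*n"
      using c cD t n0 by (subst (asm) ennreal_le_iff) auto
    have h2: "b \<le> cD*a"
    proof -
      have "ennreal b \<le> ennreal cD * ennreal a" using dbl[rule_format, OF r0] unfolding a(2) b(2) .
      then have "ennreal b \<le> ennreal (cD*a)" using a cD by (simp add: em2)
      then show ?thesis using a cD by (subst (asm) ennreal_le_iff) auto
    qed
    have h3: "e \<le> cD*b"
    proof -
      have r2: "r/2 > 0" using r0 by simp
      have "g ((r/2)/2) \<le> ennreal cD * g (r/2)" using dbl[rule_format, OF r2] .
      moreover have "(r/2)/2 = r/4" by simp
      ultimately have "g (r/4) \<le> ennreal cD * g (r/2)" by simp
      then have "ennreal e \<le> ennreal cD * ennreal b" unfolding e(2) b(2) .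
      then have "ennreal e \<le> ennreal (cD*b)" using b cD by (simp add: em2)
      then show ?thesis using b cD by (subst (asm) ennreal_le_iff) auto
    qed
    have main: "1/C*(1/a) \<le> 1/c1*n"
      unfolding C_def by (rule real2[OF c1 c2 c cD a(1) b(1) e(1) t(1) n0 h1 h2 h3])
    have "ennreal (1/C) * inverse (g r) = ennreal (1/C*(1/a))"
      unfolding a(2) einv[OF a(1)] using a C1 by (intro em2[symmetric]) auto
    also have "\<dots> \<le> ennreal (1/c1*n)" using main by (rule ennreal_leI)
    also have "\<dots> = ennreal (1/c1) * ennreal (mnorm \<nu>)" unfolding n_def using c1 n0 n_def by (intro em2) auto
    also have "\<dots> \<le> cap G (ball x r)" by (rule capge)
    finally show "ennreal (1/C) * inverse (g r) \<le> cap G (ball x r)" .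
  qed
qed

lemma real1:
  fixes c1 c2 c cD a b t n m :: real
  assumes p: "c1 \<ge> 1" "c2 \<ge> 1" "c \<ge> 1" "cD \<ge> 1" "a > 0" "b > 0" "t > 0" "n \<ge> 0"
    and F1: "1/c2*(1/b) \<le> c*c*n" and F2: "1/(c*c*cD)*t*n \<le> c1*m" and h2: "b \<le> cD*a"
  shows "1/(c1*c*c*c*c*cD*cD*c2)*(1/a)*t \<le> m"
proof -
  have cb: "c2*b > 0" using p by simp
  have "1/(c2*b) \<le> c*c*n" using F1 by simp
  then have k: "1 \<le> (c2*b)*(c*c*n)" using cb by (simp add: divide_le_eq mult.commute)
  have "(c2*b)*(c*c*n) \<le> (c2*(cD*a))*(c*c*n)" using p h2
    by (intro mult_right_mono mult_left_mono) auto
  with k have k1: "1 \<le> (c2*(cD*a))*(c*c*n)" by (rule order_trans)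
  have ccd: "c*c*cD > 0" using p by simp
  have "t*n/(c*c*cD) \<le> c1*m" using F2 by simp
  then have F2': "t*n \<le> (c*c*cD)*(c1*m)" using ccd by (simp add: divide_le_eq mult.commute)
  have "t = t*1" by simp
  also have "\<dots> \<le> t*((c2*(cD*a))*(c*c*n))" using k1 p by (intro mult_left_mono) auto
  also have "\<dots> = (c2*cD*a*c*c)*(t*n)" by (simp add: ac_simps)
  also have "\<dots> \<le> (c2*cD*a*c*c)*((c*c*cD)*(c1*m))" using F2' p by (intro mult_left_mono) auto
  also have "\<dots> = (c1*c*c*c*c*cD*cD*c2*a)*m" by (simp add: ac_simps)
  finally have k3: "t \<le> (c1*c*c*c*c*cD*cD*c2*a)*m" .
  have pos: "c1*c*c*c*c*cD*cD*c2*a > 0" using p by simp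
  have "1/(c1*c*c*c*c*cD*cD*c2)*(1/a)*t = t/(c1*c*c*c*c*cD*cD*c2*a)" by simp
  also have "\<dots> \<le> m" using k3 pos by (simp add: divide_le_eq mult.commute)
  finally show ?thesis .
qed

lemma Gswap:
  fixes G :: "'a::metric_space \<Rightarrow> 'a \<Rightarrow> ennreal" and g :: "real \<Rightarrow> ennreal"
  assumes c: "c \<ge> 1"
    and cmp: "\<forall>x y. ennreal (1/c) * g (dist x y) \<le> G x y \<and> G x y \<le> ennreal c * g (dist x y)"
  shows "G z w \<le> ennreal (c*c) * G w z"
proof -
  have "G z w \<le> ennreal c * g (dist z w)" using cmp by blast
  also have "\<dots> = ennreal c * g (dist w z)" by (simp add: dist_commute)
  also have "\<dots> \<le> ennreal c * (ennreal c * G w z)"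
  proof (rule mult_left_mono)
    show "g (dist w z) \<le> ennreal c * G w z" by (rule le_cG) (use cmp c in auto)
  qed simp
  also have "\<dots> = ennreal (c*c) * G w z" using c by (simp add: em2 mult.assoc)
  finally show ?thesis .
qed

lemma part1:
  fixes mu :: "'a::{metric_space, second_countable_topology} set \<Rightarrow> 'a \<Rightarrow> 'a measure"
    and G :: "'a \<Rightarrow> 'a \<Rightarrow> ennreal" and g :: "real \<Rightarrow> ennreal" and X0 :: "'a set"
  assumes h: "harmonic_kernel mu" and Gm: "case_prod G \<in> borel_measurable borel"
    and Gpos: "\<forall>x y. G x y > 0" and g1: "G1 mu G X0"
    and dec: "\<forall>s t. 0 \<le> s \<and> s < t \<longrightarrow> g t < g s" and gpos: "\<forall>t\<ge>0. g t > 0"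
    and c: "c \<ge> 1" and cD: "cD \<ge> 1" and dbl: "\<forall>r>0. g (r/2) \<le> ennreal cD * g r"
    and cmp: "\<forall>x y. ennreal (1/c) * g (dist x y) \<le> G x y \<and> G x y \<le> ennreal c * g (dist x y)"
    and g3g: "G3 G g X0"
  shows "G3bar mu G g X0"
proof -
  obtain c1 where c1: "c1 \<ge> 1" and G1c: "\<forall>U\<in>rel_compact_opens X0. \<forall>x\<in>U. \<forall>\<delta>::real. \<delta> > 0 \<longrightarrow>
       (\<forall>A. closed A \<and> A \<subseteq> U \<longrightarrow>
         (\<exists>B \<nu>. closed B \<and> B \<subseteq> U \<and> A \<subseteq> interior B \<and>
            fin_borel \<nu> \<and> emeasure \<nu> (UNIV - B) = 0 \<and>
            mnorm (swept mu B x) - \<delta> < c1 * mnorm (swept mu A x) \<and>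
            (\<forall>y. ennreal (mnorm (swept mu A y)) \<le> Gpot G \<nu> y \<and>
                 Gpot G \<nu> y \<le> ennreal (c1 * mnorm (swept mu B y)))))"
    using g1 unfolding G1_def by (elim exE conjE) (rule that; assumption)
  obtain c2 where c2: "c2 \<ge> 1" and g3: "\<forall>x\<in>X0. \<forall>r::real. 0 < r \<and> ereal r < R0 X0 x \<longrightarrow>
        cap G (ball x r) \<ge> ennreal (1/c2) * inverse (g r)"
    using g3g unfolding G3_def by (elim exE conjE) (rule that; assumption)
  define C where "C = c1*c*c*c*c*cD*cD*c2"
  have C1: "C \<ge> 1" unfolding C_def using c1 c2 c cD by (intro ge1_mult) auto
  show ?thesis unfolding G3bar_def
  proof (intro exI[of _ C] conjI ballI allI impI C1)
    fix x r y assume x: "x \<in> X0" and rr: "0 < r \<and> ereal r < R0 X0 x" and yb: "y \<notin> ball x r"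
    have r0: "r > 0" using rr by simp
    have dy: "dist x y \<ge> r" using yb by simp
    obtain r' where r': "r' > r" "closure (ball x r') \<subseteq> X0" using R0_less rr by blast
    define U where "U = ball x r"
    define A where "A = cball x (r/2)"
    have U: "U \<in> rel_compact_opens X0"
    proof -
      have "closure U \<subseteq> cball x r" unfolding U_def by (rule cl_sub)
      also have "\<dots> \<subseteq> ball x r'" using r' r0 by auto
      also have "\<dots> \<subseteq> X0" using r' closure_subset by blast
      finally show ?thesis unfolding rel_compact_opens_def U_def by auto
    qed
    have xU: "x \<in> U" unfolding U_def using r0 by simp
    have A: "closed A" "A \<subseteq> U" unfolding A_def U_def using r0 by auto
    have "\<exists>B \<nu>. closed B \<and> B \<subseteq> U \<and> A \<subseteq> interior B \<and>
            fin_borel \<nu> \<and> emeasure \<nu> (UNIV - B) = 0 \<and>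
            mnorm (swept mu B x) - 1 < c1 * mnorm (swept mu A x) \<and>
            (\<forall>y. ennreal (mnorm (swept mu A y)) \<le> Gpot G \<nu> y \<and>
                 Gpot G \<nu> y \<le> ennreal (c1 * mnorm (swept mu B y)))"
      using G1c[rule_format, OF U xU zero_less_one conjI[OF A(1) A(2)]] .
    then obtain B \<nu> where B: "closed B" "B \<subseteq> U" and fnu: "fin_borel \<nu>" and nuB: "emeasure \<nu> (UNIV - B) = 0"
      and Gnu: "\<forall>y. ennreal (mnorm (swept mu A y)) \<le> Gpot G \<nu> y \<and> Gpot G \<nu> y \<le> ennreal (c1 * mnorm (swept mu B y))"
      by blast
    have nn: "emeasure \<nu> UNIV = ennreal (mnorm \<nu>)" by (rule mnorm_emeasure[OF fnu])
    have NB: "UNIV - B \<in> sets borel" using B(1) by (simp add: open_Diff)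
    have AE_B: "AE w in \<nu>. w \<in> B"
    proof (rule AE_I'[of "UNIV - B"])
      show "UNIV - B \<in> null_sets \<nu>" using NB nuB fb_sets[OF fnu] by (simp add: null_sets_def)
    qed (use fb_space[OF fnu] in auto)
    have capb: "cap G (ball x (r/2)) \<le> ennreal (c*c) * emeasure \<nu> UNIV"
      unfolding cap_def
    proof (rule Sup_least)
      fix v assume "v \<in> {emeasure \<mu> (space \<mu>) |\<mu>. fin_borel \<mu> \<and>
         (\<exists>N\<in>sets borel. UNIV - ball x (r/2) \<subseteq> N \<and> emeasure \<mu> N = 0) \<and> (\<forall>x. Gpot G \<mu> x \<le> 1)}"
      then obtain \<mu> N where v: "v = emeasure \<mu> (space \<mu>)" and fmu: "fin_borel \<mu>"
        and N: "N \<in> sets borel" "UNIV - ball x (r/2) \<subseteq> N" "emeasure \<mu> N = 0"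
        and Gmu: "\<forall>x. Gpot G \<mu> x \<le> 1" by blast
      have AE_mu: "AE z in \<mu>. z \<in> ball x (r/2)"
      proof (rule AE_I'[of N])
        show "N \<in> null_sets \<mu>" using N fb_sets[OF fmu] by (simp add: null_sets_def)
      qed (use N in auto)
      interpret P: pair_sigma_finite \<mu> \<nu>
        using fb_finite[OF fmu] fb_finite[OF fnu]
        by (intro pair_sigma_finite.intro) (simp_all add: finite_measure_def)
      have mG: "case_prod G \<in> borel_measurable (\<mu> \<Otimes>\<^sub>M \<nu>)"
      proof -
        have "sets (\<mu> \<Otimes>\<^sub>M \<nu>) = sets (borel \<Otimes>\<^sub>M borel)"
          by (rule sets_pair_measure_cong[OF fb_sets[OF fmu] fb_sets[OF fnu]])
        also have "\<dots> = sets (borel :: ('a \<times> 'a) measure)" by (simp only: borel_prod)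
        finally have "(borel_measurable (\<mu> \<Otimes>\<^sub>M \<nu>) :: ('a \<times> 'a \<Rightarrow> ennreal) set) = borel_measurable borel"
          by (rule measurable_cong_sets) simp
        then show ?thesis using Gm by simp
      qed
      have "v = (\<integral>\<^sup>+z. 1 \<partial>\<mu>)" unfolding v by simp
      also have "\<dots> \<le> (\<integral>\<^sup>+z. Gpot G \<nu> z \<partial>\<mu>)"
      proof (rule nn_integral_mono_AE)
        show "AE z in \<mu>. 1 \<le> Gpot G \<nu> z"
          using AE_mu
        proof (rule AE_mp)
          show "AE z in \<mu>. z \<in> ball x (r/2) \<longrightarrow> 1 \<le> Gpot G \<nu> z"
          proof (intro AE_I2 impI)
            fix z assume "z \<in> ball x (r/2)"
            then have zA: "z \<in> A" unfolding A_def by auto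
            have "(1::ennreal) = ennreal (mnorm (swept mu A z))" using swept_in[OF h A(1) zA] by simp
            also have "\<dots> \<le> Gpot G \<nu> z" using Gnu by blast
            finally show "1 \<le> Gpot G \<nu> z" .
          qed
        qed
      qed
      also have "\<dots> = (\<integral>\<^sup>+z. (\<integral>\<^sup>+w. G z w \<partial>\<nu>) \<partial>\<mu>)" unfolding Gpot_def ..
      also have "\<dots> = (\<integral>\<^sup>+w. (\<integral>\<^sup>+z. G z w \<partial>\<mu>) \<partial>\<nu>)" using P.Fubini'[OF mG] by simp
      also have "\<dots> \<le> (\<integral>\<^sup>+w. ennreal (c*c) * Gpot G \<mu> w \<partial>\<nu>)"
      proof (rule nn_integral_mono)
        fix w
        have "(\<integral>\<^sup>+z. G z w \<partial>\<mu>) \<le> (\<integral>\<^sup>+z. ennreal (c*c) * G w z \<partial>\<mu>)"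
          by (rule nn_integral_mono) (rule Gswap[OF c cmp])
        also have "\<dots> = ennreal (c*c) * Gpot G \<mu> w"
          unfolding Gpot_def by (rule nn_integral_cmult[OF G_meas[OF Gm fmu]])
        finally show "(\<integral>\<^sup>+z. G z w \<partial>\<mu>) \<le> ennreal (c*c) * Gpot G \<mu> w" .
      qed
      also have "\<dots> \<le> (\<integral>\<^sup>+w. ennreal (c*c) \<partial>\<nu>)"
      proof (rule nn_integral_mono)
        fix w
        have "ennreal (c*c) * Gpot G \<mu> w \<le> ennreal (c*c) * 1" using Gmu by (intro mult_left_mono) auto
        then show "ennreal (c*c) * Gpot G \<mu> w \<le> ennreal (c*c)" by simp
      qed
      also have "\<dots> = ennreal (c*c) * emeasure \<nu> UNIV" by (simp add: fb_space[OF fnu])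
      finally show "v \<le> ennreal (c*c) * emeasure \<nu> UNIV" .
    qed
    have lo: "ennreal (1/(c*c*cD)) * G y x * emeasure \<nu> UNIV \<le> Gpot G \<nu> y"
    proof -
      have "ennreal (1/(c*c*cD)) * G y x * emeasure \<nu> UNIV = (\<integral>\<^sup>+w. ennreal (1/(c*c*cD)) * G y x \<partial>\<nu>)"
        by (simp add: fb_space[OF fnu])
      also have "\<dots> \<le> (\<integral>\<^sup>+w. G y w \<partial>\<nu>)"
      proof (rule nn_integral_mono_AE)
        show "AE w in \<nu>. ennreal (1/(c*c*cD)) * G y x \<le> G y w"
          using AE_B
        proof (rule AE_mp)
          show "AE w in \<nu>. w \<in> B \<longrightarrow> ennreal (1/(c*c*cD)) * G y x \<le> G y w"
          proof (intro AE_I2 impI)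
            fix w assume "w \<in> B"
            then have "dist x w < r" using B(2) unfolding U_def by auto
            then show "ennreal (1/(c*c*cD)) * G y x \<le> G y w"
              by (rule geo1[OF dec c cD dbl cmp dy _ r0])
          qed
        qed
      qed
      also have "\<dots> = Gpot G \<nu> y" unfolding Gpot_def ..
      finally show ?thesis .
    qed
    define m where "m = mnorm (swept mu (closure (ball x r)) y)"
    have m0: "m \<ge> 0" unfolding m_def by (rule mnorm_nonneg)
    have upy: "Gpot G \<nu> y \<le> ennreal (c1 * m)"
    proof -
      have "Gpot G \<nu> y \<le> ennreal (c1 * mnorm (swept mu B y))" using Gnu by blast
      also have "\<dots> \<le> ennreal (c1 * m)"
      proof (intro ennreal_leI mult_left_mono)
        have "B \<subseteq> closure (ball x r)" using B(2) closure_subset unfolding U_def by blast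
        then show "mnorm (swept mu B y) \<le> m" unfolding m_def
          by (intro swept_mono[OF h B(1)]) auto
      qed (use c1 in simp)
      finally show ?thesis .
    qed
    have r2: "r/2 > 0" using r0 by simp
    have capg: "ennreal (1/c2) * inverse (g (r/2)) \<le> cap G (ball x (r/2))"
    proof -
      have "ereal (r/2) \<le> ereal r" using r0 by simp
      then have R2: "ereal (r/2) < R0 X0 x" using rr order_le_less_trans by blast
      show ?thesis using g3[rule_format, OF x conjI[OF r2 R2]] .
    qed
    have gfin: "\<And>s. s > 0 \<Longrightarrow> g s < top" using g_fin[OF dec] by blast
    obtain a where a: "a > 0" "g r = ennreal a" using enn_real[of "g r"] gpos gfin r0 by auto
    obtain b where b: "b > 0" "g (r/2) = ennreal b" using enn_real[of "g (r/2)"] gpos gfin r0 by auto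
    have yx: "y \<noteq> x" using dy r0 by auto
    have Gfin: "G y x < top"
    proof -
      have "G y x \<le> ennreal c * g (dist y x)" using cmp by blast
      also have "\<dots> < top" using gfin[of "dist y x"] yx by (simp add: ennreal_mult_less_top)
      finally show ?thesis .
    qed
    obtain t where t: "t > 0" "G y x = ennreal t" using enn_real[of "G y x"] Gpos Gfin by auto
    define n where "n = mnorm \<nu>"
    have n0: "n \<ge> 0" unfolding n_def by (rule mnorm_nonneg)
    have F1: "1/c2*(1/b) \<le> c*c*n"
    proof -
      have "ennreal (1/c2*(1/b)) = ennreal (1/c2) * inverse (g (r/2))"
        unfolding b(2) einv[OF b(1)] using b c2 by (intro em2) auto
      also have "\<dots> \<le> ennreal (c*c) * emeasure \<nu> UNIV" using capg capb by (rule order_trans)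
      also have "\<dots> = ennreal (c*c*n)" unfolding nn n_def using c n0 n_def by (intro em2[symmetric]) auto
      finally show ?thesis using c n0 by (subst (asm) ennreal_le_iff) auto
    qed
    have F2: "1/(c*c*cD)*t*n \<le> c1*m"
    proof -
      have "ennreal (1/(c*c*cD)*t*n) = ennreal (1/(c*c*cD)) * G y x * emeasure \<nu> UNIV"
        unfolding t(2) nn n_def[symmetric] using c cD t n0 by (intro em3) auto
      also have "\<dots> \<le> ennreal (c1 * m)" using lo upy by (rule order_trans)
      finally show ?thesis using c1 m0 by (subst (asm) ennreal_le_iff) auto
    qed
    have h2: "b \<le> cD*a"
    proof -
      have "ennreal b \<le> ennreal cD * ennreal a" using dbl[rule_format, OF r0] unfolding a(2) b(2) .
      then have "ennreal b \<le> ennreal (cD*a)" using a cD by (simp add: em2)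
      then show ?thesis using a cD by (subst (asm) ennreal_le_iff) auto
    qed
    have main: "1/C*(1/a)*t \<le> m"
      unfolding C_def by (rule real1[OF c1 c2 c cD a(1) b(1) t(1) n0 F1 F2 h2])
    have "ennreal (1/C) * inverse (g r) * G y x = ennreal (1/C*(1/a)*t)"
      unfolding a(2) t(2) einv[OF a(1)] using a t C1 by (intro em3[symmetric]) auto
    also have "\<dots> \<le> ennreal m" using main by (rule ennreal_leI)
    finally show "ennreal (1/C) * inverse (g r) * G y x \<le> ennreal (mnorm (swept mu (closure (ball x r)) y))"
      unfolding m_def .
  qed
qed


theorem proposition4p6:
  fixes mu :: "'a::{metric_space, second_countable_topology} set \<Rightarrow> 'a \<Rightarrow> 'a measure"
    and G :: "'a \<Rightarrow> 'a \<Rightarrow> ennreal"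
    and g :: "real \<Rightarrow> ennreal"
    and X0 :: "'a set"
  assumes "open X0"
    and "harmonic_kernel mu"
    and "case_prod G \<in> borel_measurable borel"
    and "\<forall>x y. G x y > 0"
    and "G1 mu G X0"
    and "G2 G g"
  shows "(G3 G g X0 \<longrightarrow> G3bar mu G g X0) \<and>
         (X0 \<noteq> UNIV \<and> G3bar mu G g X0 \<longrightarrow> G3 G g X0)"
proof -
  have dec: "\<forall>s t. 0 \<le> s \<and> s < t \<longrightarrow> g t < g s"
    using assms(6) unfolding G2_def by (elim conjE) assumption
  have gpos: "\<forall>t\<ge>0. g t > 0"
    using assms(6) unfolding G2_def by (elim conjE) assumption
  obtain c cD where c: "c \<ge> 1" and cD: "cD \<ge> 1" and dbl: "\<forall>r>0. g (r/2) \<le> ennreal cD * g r"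
    and cmp: "\<forall>x y. ennreal (1/c) * g (dist x y) \<le> G x y \<and> G x y \<le> ennreal c * g (dist x y)"
    using assms(6) unfolding G2_def by (elim exE conjE) (rule that; assumption)
  show ?thesis
  proof (intro conjI impI)
    assume "G3 G g X0"
    then show "G3bar mu G g X0"
      by (rule part1[OF assms(2,3,4,5) dec gpos c cD dbl cmp])
  next
    assume "X0 \<noteq> UNIV \<and> G3bar mu G g X0"
    then show "G3 G g X0"
      using part2[OF assms(2,3,4,5) dec gpos c cD dbl cmp] by blast
  qed
qed

end
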